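(* Assume that MSCQ holds for the system $G(z)\in K$ at $\bar z$, and let $v\in Z$ satisfy $\nabla G(\bar z)v\in K$. Then there is $\kappa>0$ with the following property. For every pair $(w,q)\in Z\times E$ with $$\nabla G(\bar z)w+\tfrac12\nabla^2G(\bar z)(v,v)+q\in T_K(\nabla G(\bar z)v)$$ there exists $\widetilde w\in Z$ such that $$\nabla G(\bar z)\widetilde w+\tfrac12\nabla^2G(\bar z)(v,v)\in T_K(\nabla G(\bar z)v)\quad\text{and}\quad \|\widetilde w-w\|\le\kappa\|q\|.$$ Equivalently, the mapping $\Theta\colon E\rightrightarrows Z$ defined by $\Theta(q):=\{w:\nabla G(\bar z)w+\frac12\nabla^2G(\bar z)(v,v)+q\in T_K(\nabla G(\bar z)v)\}$ satisfies $\Theta(q)\subset\Theta(0)+\kappa\|q\|{\cal B}_Z$ for all $q\in E$.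
   Context: Setting: $Z$ and $E$ are finite-dimensional spaces, $\bar z\in Z$, and $K\subset E$ is a closed convex cone. The map $G\colon Z\to E$ is $C^2$-smooth around $\bar z$ with $G(\bar z)=0$. (In the paper $Z=P\times X$ and $G=h\circ g$ is the reduction mapping of a $C^2$-cone reducible constraint system.) $\nabla^2G(\bar z)(v,v)$ is the second derivative of $G$ at $\bar z$ evaluated at $(v,v)$. For a closed set $\Omega$ and $\bar y\in\Omega$, the tangent cone is $T_\Omega(\bar y):=\{w:\exists\, t_k\downarrow0,\ w_k\to w \text{ with } \bar y+t_kw_k\in\Omega\}$. The system $G(z)\in K$ satisfies MSCQ at $\bar z$ if there is $\kappa'\ge0$ such that ${\rm dist}(z;G^{-1}(K))\le\kappa'\,{\rm dist}(G(z);K)$ for all $z$ near $\bar z$. ${\cal B}_Z$ is the closed unit ball. *)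

theory Defs
  imports "HOL-Analysis.Analysis"
begin

definition tangent_cone :: "'a::real_normed_vector set \<Rightarrow> 'a \<Rightarrow> 'a set" where
  "tangent_cone \<Omega> y = {w. \<exists>t wk. (\<forall>k. t k > 0) \<and> t \<longlonglongrightarrow> 0 \<and> wk \<longlonglongrightarrow> w
                          \<and> (\<forall>k. y + t k *\<^sub>R wk k \<in> \<Omega>)}"

definition MSCQ :: "('z::real_normed_vector \<Rightarrow> 'e::real_normed_vector) \<Rightarrow> 'e set \<Rightarrow> 'z \<Rightarrow> bool" where
  "MSCQ G K zbar \<longleftrightarrow> (\<exists>\<kappa>'\<ge>0. \<exists>\<epsilon>>0. \<forall>z\<in>ball zbar \<epsilon>.
       infdist z (G -` K) \<le> \<kappa>' * infdist (G z) K)"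

end

theory Submission imports Defs begin

lemma taylor2:
  fixes G :: "'z::euclidean_space \<Rightarrow> 'e::euclidean_space"
    and G' :: "'z \<Rightarrow> ('z \<Rightarrow>\<^sub>L 'e)"
    and B :: "'z \<Rightarrow>\<^sub>L ('z \<Rightarrow>\<^sub>L 'e)"
  assumes dpos: "\<delta> > 0"
    and dG: "\<forall>z\<in>ball zbar \<delta>. (G has_derivative blinfun_apply (G' z)) (at z)"
    and dG': "(G' has_derivative blinfun_apply B) (at zbar)"
    and e: "e > 0"
  shows "\<exists>d>0. \<forall>h. norm h < d \<longrightarrow>
     norm (G (zbar + h) - G zbar - G' zbar h - (1/2) *\<^sub>R B h h) \<le> e * (norm h)^2"
proof -
  obtain d1 where d1: "d1 > 0" "\<forall>y. norm (y - zbar) < d1 \<longrightarrow>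
      norm (G' y - G' zbar - B (y - zbar)) \<le> e * norm (y - zbar)"
    using dG' e unfolding has_derivative_at_alt by blast
  show ?thesis
  proof (intro exI[of _ "min \<delta> d1"] conjI allI impI)
    show "min \<delta> d1 > 0" using dpos d1 by simp
    fix h :: 'z assume h: "norm h < min \<delta> d1"
    define f where "f s = G (zbar + s *\<^sub>R h) - (s^2/2) *\<^sub>R B h h" for s :: real
    define f' where "f' s = G' (zbar + s *\<^sub>R h) h - s *\<^sub>R B h h" for s :: real
    have der: "(f has_vector_derivative f' s) (at s within {0..1})" if s: "s \<in> {0..1}" for s
    proof -
      have "s * norm h \<le> norm h" using s by (simp add: mult_left_le_one_le)
      then have "norm (s *\<^sub>R h) < \<delta>" using s h by auto
      then have inb: "zbar + s *\<^sub>R h \<in> ball zbar \<delta>" by (simp add: dist_norm)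
      have d1: "((\<lambda>s. G (zbar + s *\<^sub>R h)) has_derivative (\<lambda>x. G' (zbar + s *\<^sub>R h) (x *\<^sub>R h))) (at s within {0..1})"
        apply (rule has_derivative_compose[of "\<lambda>s. zbar + s *\<^sub>R h" "\<lambda>x. x *\<^sub>R h"])
         apply (auto intro!: derivative_eq_intros)[1]
        apply (rule has_derivative_at_withinI)
        using dG inb by blast
      have d2: "((\<lambda>s. (s^2/2) *\<^sub>R B h h) has_derivative (\<lambda>x. (x * s) *\<^sub>R B h h)) (at s within {0..1})"
        by (auto intro!: derivative_eq_intros simp: power2_eq_square)
      have "(f has_derivative (\<lambda>x. G' (zbar + s *\<^sub>R h) (x *\<^sub>R h) - (x * s) *\<^sub>R B h h)) (at s within {0..1})"
        unfolding f_def by (rule has_derivative_diff[OF d1 d2])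
      then show ?thesis unfolding has_vector_derivative_def f'_def
        by (simp add: blinfun.scaleR_right scaleR_diff_right)
    qed
    have bnd: "norm (f' s - f' 0) \<le> e * (norm h)^2" if s: "s \<in> {0..1}" for s
    proof -
      have ns: "norm (s *\<^sub>R h) \<le> norm h" using s by (auto simp: mult_left_le_one_le)
      have "f' s - f' 0 = (G' (zbar + s *\<^sub>R h) - G' zbar - B (s *\<^sub>R h)) h"
        unfolding f'_def by (simp add: blinfun.diff_left blinfun.scaleR_left blinfun.scaleR_right)
      also have "norm \<dots> \<le> norm (G' (zbar + s *\<^sub>R h) - G' zbar - B (s *\<^sub>R h)) * norm h"
        by (rule norm_blinfun)
      also have "\<dots> \<le> (e * norm (s *\<^sub>R h)) * norm h"
        apply (rule mult_right_mono) using d1(2)[rule_format, of "zbar + s *\<^sub>R h"] ns h by auto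
      also have "\<dots> \<le> (e * norm h) * norm h"
        using ns e by (intro mult_right_mono mult_left_mono) auto
      finally show ?thesis by (simp add: power2_eq_square)
    qed
    have "norm (f 1 - f 0 - (1 - 0) *\<^sub>R f' 0) \<le> norm (1 - 0::real) * (e * (norm h)^2)"
      apply (rule vector_differentiable_bound_linearization[where S="{0..1}" and f=f and f'=f' and ?x0.0=0])
      using der bnd by (auto simp: closed_segment_eq_real_ivl)
    then show "norm (G (zbar + h) - G zbar - G' zbar h - (1/2) *\<^sub>R B h h) \<le> e * (norm h)^2"
      unfolding f_def f'_def by (simp add: algebra_simps)
  qed
qed


lemma id1:
  fixes A :: "'z::euclidean_space \<Rightarrow>\<^sub>L 'e::euclidean_space" and B :: "'z \<Rightarrow>\<^sub>L ('z \<Rightarrow>\<^sub>L 'e)"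
  assumes t: "t \<noteq> 0"
  shows "(1/t) *\<^sub>R ((1/t) *\<^sub>R Gy - A v) =
     A u + (1/2) *\<^sub>R B (v + t *\<^sub>R u) (v + t *\<^sub>R u) + (1/t^2) *\<^sub>R (Gy - A (t *\<^sub>R (v + t *\<^sub>R u)) - (1/2) *\<^sub>R B (t *\<^sub>R (v + t *\<^sub>R u)) (t *\<^sub>R (v + t *\<^sub>R u)))"
  using t by (simp add: blinfun.scaleR_right blinfun.scaleR_left blinfun.add_right blinfun.add_left
      algebra_simps power2_eq_square)

lemma id2:
  fixes A :: "'z::euclidean_space \<Rightarrow>\<^sub>L 'e::euclidean_space" and B :: "'z \<Rightarrow>\<^sub>L ('z \<Rightarrow>\<^sub>L 'e)"
  assumes t: "t \<noteq> 0"
  shows "(1/t^2) *\<^sub>R (Gz - t *\<^sub>R (A v + t *\<^sub>R d)) =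
     A w + (1/2) *\<^sub>R B (v + t *\<^sub>R w) (v + t *\<^sub>R w) + (1/t^2) *\<^sub>R (Gz - A (t *\<^sub>R (v + t *\<^sub>R w)) - (1/2) *\<^sub>R B (t *\<^sub>R (v + t *\<^sub>R w)) (t *\<^sub>R (v + t *\<^sub>R w))) - d"
  using t by (simp add: blinfun.scaleR_right blinfun.scaleR_left blinfun.add_right blinfun.add_left
      algebra_simps power2_eq_square)


lemma rem_seq:
  fixes R :: "'z::real_normed_vector \<Rightarrow> 'e::real_normed_vector"
  assumes T: "\<forall>e>0. \<exists>d>0. \<forall>h. norm h < d \<longrightarrow> norm (R h) \<le> e * (norm h)^2"
    and tpos: "\<forall>k. t k > 0" and t0: "t \<longlonglongrightarrow> 0" and C: "\<forall>k. norm (u k) \<le> C"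
  shows "(\<lambda>k. (1/(t k)^2) *\<^sub>R R (t k *\<^sub>R u k)) \<longlonglongrightarrow> 0"
proof (rule LIMSEQ_I)
  fix r :: real assume r: "r > 0"
  have C0: "C \<ge> 0" using C norm_ge_zero order_trans by blast
  define e where "e = r / (2 * (C^2 + 1))"
  have e: "e > 0" using r unfolding e_def by (intro divide_pos_pos) (auto simp: add_pos_nonneg zero_le_power2 intro: add_nonneg_pos)
  obtain d where d: "d > 0" "\<forall>h. norm h < d \<longrightarrow> norm (R h) \<le> e * (norm h)^2" using T e by blast
  have "d / (C + 1) > 0" using d C0 by simp
  then obtain N where N: "\<forall>n\<ge>N. norm (t n - 0) < d / (C + 1)" using LIMSEQ_D[OF t0] by blast
  show "\<exists>no. \<forall>n\<ge>no. norm ((1/(t n)^2) *\<^sub>R R (t n *\<^sub>R u n) - 0) < r"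
  proof (intro exI allI impI)
    fix n assume n: "n \<ge> N"
    have tn: "t n > 0" using tpos by auto
    have "\<bar>t n\<bar> * (C + 1) < d" using N n C0 by (simp add: pos_less_divide_eq)
    then have tl: "t n * (C + 1) < d" using tn by simp
    have nu: "norm (t n *\<^sub>R u n) \<le> t n * C" using C tn by (simp add: mult_left_mono)
    have "norm (t n *\<^sub>R u n) < d" using nu tl tn C0
      by (smt (verit, ccfv_SIG) distrib_left mult.commute mult_cancel_right1)
    then have "norm (R (t n *\<^sub>R u n)) \<le> e * (norm (t n *\<^sub>R u n))^2" using d by blast
    also have "\<dots> \<le> e * (t n * C)^2" using nu e by (intro mult_left_mono power_mono) auto
    finally have b: "norm (R (t n *\<^sub>R u n)) \<le> e * (t n)^2 * C^2" by (simp add: power_mult_distrib)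
    have "norm ((1/(t n)^2) *\<^sub>R R (t n *\<^sub>R u n)) = norm (R (t n *\<^sub>R u n)) / (t n)^2"
      using tn by simp
    also have "\<dots> \<le> e * C^2" using b tn by (simp add: divide_le_eq mult.commute mult.left_commute)
    also have "\<dots> < r"
    proof -
      have p: "2 * (C^2 + 1) > 0" by (smt (verit) zero_le_power2)
      have "e * C^2 = r * C^2 / (2 * (C^2 + 1))" unfolding e_def by simp
      also have "\<dots> < r" using p r by (simp add: divide_less_eq)
      finally show ?thesis .
    qed
    finally show "norm ((1/(t n)^2) *\<^sub>R R (t n *\<^sub>R u n) - 0) < r" by simp
  qed
qed

lemma infdist_approx:
  assumes "A \<noteq> {}" "e > 0"
  shows "\<exists>a\<in>A. dist x a < infdist x A + e"
proof (rule ccontr)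
  assume "\<not> ?thesis"
  then have "\<forall>a\<in>A. infdist x A + e \<le> dist x a" by auto
  then have "infdist x A + e \<le> infdist x A"
    unfolding infdist_notempty[OF assms(1)] by (intro cINF_greatest assms(1)) auto
  then show False using assms by simp
qed


theorem proposition3p1:
  fixes G :: "'z::euclidean_space \<Rightarrow> 'e::euclidean_space"
    and G' :: "'z \<Rightarrow> ('z \<Rightarrow>\<^sub>L 'e)"
    and G'' :: "'z \<Rightarrow> ('z \<Rightarrow>\<^sub>L ('z \<Rightarrow>\<^sub>L 'e))"
    and K :: "'e set" and zbar v :: 'z
  assumes K: "closed K" "convex K" "cone K"
    and C2: "\<exists>\<delta>>0. (\<forall>z\<in>ball zbar \<delta>. (G has_derivative blinfun_apply (G' z)) (at z)
                 \<and> (G' has_derivative blinfun_apply (G'' z)) (at z))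
               \<and> continuous_on (ball zbar \<delta>) G''"
    and G0: "G zbar = 0"
    and mscq: "MSCQ G K zbar"
    and v: "G' zbar v \<in> K"
  shows "\<exists>\<kappa>>0. \<forall>w q.
           G' zbar w + (1/2) *\<^sub>R (G'' zbar v v) + q \<in> tangent_cone K (G' zbar v) \<longrightarrow>
           (\<exists>w'. G' zbar w' + (1/2) *\<^sub>R (G'' zbar v v) \<in> tangent_cone K (G' zbar v)
                 \<and> norm (w' - w) \<le> \<kappa> * norm q)"
proof -
  define A where "A = G' zbar"
  define B where "B = G'' zbar"
  define R where "R h = G (zbar + h) - A h - (1/2) *\<^sub>R B h h" for h
  obtain \<delta> where \<delta>: "\<delta> > 0" "\<forall>z\<in>ball zbar \<delta>. (G has_derivative blinfun_apply (G' z)) (at z)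
                 \<and> (G' has_derivative blinfun_apply (G'' z)) (at z)"
    using C2 by blast
  have T: "\<forall>e>0. \<exists>d>0. \<forall>h. norm h < d \<longrightarrow> norm (R h) \<le> e * (norm h)^2"
  proof (intro allI impI)
    fix e :: real assume e: "e > 0"
    have "(G' has_derivative blinfun_apply B) (at zbar)" using \<delta> unfolding B_def by auto
    moreover have "\<forall>z\<in>ball zbar \<delta>. (G has_derivative blinfun_apply (G' z)) (at z)" using \<delta> by blast
    ultimately have "\<exists>d>0. \<forall>h. norm h < d \<longrightarrow>
     norm (G (zbar + h) - G zbar - G' zbar h - (1/2) *\<^sub>R B h h) \<le> e * (norm h)^2"
      using taylor2[OF \<delta>(1) _ _ e] by blast
    then show "\<exists>d>0. \<forall>h. norm h < d \<longrightarrow> norm (R h) \<le> e * (norm h)^2"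
      unfolding R_def A_def using G0 by auto
  qed
  have coneK: "\<And>x c. x \<in> K \<Longrightarrow> c \<ge> 0 \<Longrightarrow> c *\<^sub>R x \<in> K" using K(3) unfolding cone_def by blast
  have K0: "0 \<in> K" using coneK[OF v, of 0] by simp
  obtain \<kappa>' \<epsilon> where mq: "\<kappa>' \<ge> 0" "\<epsilon> > 0"
    "\<forall>z\<in>ball zbar \<epsilon>. infdist z (G -` K) \<le> \<kappa>' * infdist (G z) K"
    using mscq unfolding MSCQ_def by blast
  have ne: "G -` K \<noteq> {}" using G0 K0 by auto
  show ?thesis
  proof (intro exI[of _ "\<kappa>' + 1"] conjI allI impI)
    show "\<kappa>' + 1 > 0" using mq by simp
    fix w q
    assume "G' zbar w + (1/2) *\<^sub>R (G'' zbar v v) + q \<in> tangent_cone K (G' zbar v)"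
    then obtain t0 d0 where t0: "\<forall>k. t0 k > 0" "t0 \<longlonglongrightarrow> 0" and d0: "d0 \<longlonglongrightarrow> A w + (1/2) *\<^sub>R B v v + q"
      and inK0: "\<forall>k. A v + t0 k *\<^sub>R d0 k \<in> K"
      unfolding tangent_cone_def A_def B_def by blast
    have "(\<lambda>k. zbar + t0 k *\<^sub>R (v + t0 k *\<^sub>R w)) \<longlonglongrightarrow> zbar + 0 *\<^sub>R (v + 0 *\<^sub>R w)"
      by (intro tendsto_intros t0)
    then have "(\<lambda>k. zbar + t0 k *\<^sub>R (v + t0 k *\<^sub>R w)) \<longlonglongrightarrow> zbar" by simp
    then obtain N where N: "\<forall>k\<ge>N. dist (zbar + t0 k *\<^sub>R (v + t0 k *\<^sub>R w)) zbar < \<epsilon>"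
      using LIMSEQ_D[of _ zbar] mq(2) unfolding dist_norm by blast
    define t where "t k = t0 (k + N)" for k
    define d where "d k = d0 (k + N)" for k
    have tpos: "\<forall>k. t k > 0" using t0 by (simp add: t_def)
    have tlim: "t \<longlonglongrightarrow> 0" unfolding t_def using LIMSEQ_ignore_initial_segment[OF t0(2)] .
    have dlim: "d \<longlonglongrightarrow> A w + (1/2) *\<^sub>R B v v + q" unfolding d_def using LIMSEQ_ignore_initial_segment[OF d0] .
    have inK: "\<forall>k. A v + t k *\<^sub>R d k \<in> K" using inK0 by (simp add: t_def d_def)
    define z where "z k = zbar + t k *\<^sub>R (v + t k *\<^sub>R w)" for k
    have zin: "\<forall>k. z k \<in> ball zbar \<epsilon>" using N by (simp add: z_def t_def dist_commute)
    define x where "x k = v + t k *\<^sub>R w" for k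
    have "(\<lambda>k. v + t k *\<^sub>R w) \<longlonglongrightarrow> v + 0 *\<^sub>R w" by (intro tendsto_intros tlim)
    then have xlim: "x \<longlonglongrightarrow> v" unfolding x_def by simp
    obtain Cx where Cx: "\<forall>k. norm (x k) \<le> Cx"
      using convergent_imp_Bseq[OF convergentI[OF xlim]] unfolding Bseq_def by (meson less_imp_le)
    define E where "E k = (1/(t k)^2) *\<^sub>R (G (z k) - t k *\<^sub>R (A v + t k *\<^sub>R d k))" for k
    have Eeq: "E k = A w + (1/2) *\<^sub>R B (x k) (x k) + (1/(t k)^2) *\<^sub>R R (t k *\<^sub>R x k) - d k" for k
      unfolding E_def R_def z_def x_def by (rule id2) (metis tpos less_irrefl)
    have Rlim1: "(\<lambda>k. (1/(t k)^2) *\<^sub>R R (t k *\<^sub>R x k)) \<longlonglongrightarrow> 0"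
      by (rule rem_seq[OF T tpos tlim Cx])
    have "(\<lambda>k. A w + (1/2) *\<^sub>R B (x k) (x k) + (1/(t k)^2) *\<^sub>R R (t k *\<^sub>R x k) - d k) \<longlonglongrightarrow>
          A w + (1/2) *\<^sub>R B v v + 0 - (A w + (1/2) *\<^sub>R B v v + q)"
      by (intro tendsto_intros xlim Rlim1 dlim blinfun.tendsto)
    then have Elim: "E \<longlonglongrightarrow> - q" unfolding Eeq[abs_def] by simp
    have distK: "infdist (G (z k)) K \<le> (t k)^2 * norm (E k)" for k
    proof -
      have "t k *\<^sub>R (A v + t k *\<^sub>R d k) \<in> K" using coneK inK tpos less_imp_le by blast
      then have "infdist (G (z k)) K \<le> dist (G (z k)) (t k *\<^sub>R (A v + t k *\<^sub>R d k))" by (rule infdist_le)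
      also have "\<dots> = (t k)^2 * norm (E k)" using tpos[rule_format, of k]
        unfolding E_def dist_norm by simp
      finally show ?thesis .
    qed
    have "\<forall>k. \<exists>y\<in>G -` K. dist (z k) y < infdist (z k) (G -` K) + (t k)^3"
      using infdist_approx[OF ne] tpos by simp
    then obtain y where y: "\<forall>k. y k \<in> G -` K" "\<forall>k. dist (z k) (y k) < infdist (z k) (G -` K) + (t k)^3"
      by metis
    define wk where "wk k = (1/(t k)^2) *\<^sub>R (y k - zbar - t k *\<^sub>R v)" for k
    have yeq: "y k = zbar + t k *\<^sub>R (v + t k *\<^sub>R wk k)" for k
      using tpos[rule_format, of k] unfolding wk_def by (simp add: algebra_simps power2_eq_square)
    have wkb: "norm (wk k - w) \<le> \<kappa>' * norm (E k) + t k" for k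
    proof -
      have tk: "t k > 0" using tpos by auto
      have "wk k - w = (1/(t k)^2) *\<^sub>R (y k - z k)"
        using tk unfolding wk_def z_def by (simp add: algebra_simps power2_eq_square)
      then have "norm (wk k - w) = dist (z k) (y k) / (t k)^2"
        by (simp add: dist_norm norm_minus_commute)
      moreover have "dist (z k) (y k) \<le> (t k)^2 * (\<kappa>' * norm (E k) + t k)"
      proof -
        have "dist (z k) (y k) < \<kappa>' * infdist (G (z k)) K + (t k)^3"
          using y(2) mq(3) zin by (smt (verit))
        also have "\<kappa>' * infdist (G (z k)) K \<le> \<kappa>' * ((t k)^2 * norm (E k))"
          using distK mq(1) by (intro mult_left_mono) auto
        finally show ?thesis by (simp add: algebra_simps power3_eq_cube power2_eq_square)
      qed
      ultimately show ?thesis using tk by (simp add: divide_le_eq mult.commute)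
    qed
    have bndlim: "(\<lambda>k. \<kappa>' * norm (E k) + t k) \<longlonglongrightarrow> \<kappa>' * norm (- q) + 0"
      by (intro tendsto_intros Elim tlim)
    obtain Cw where Cw: "\<forall>k. norm (\<kappa>' * norm (E k) + t k) \<le> Cw"
      using convergent_imp_Bseq[OF convergentI[OF bndlim]] unfolding Bseq_def by (meson less_imp_le)
    have "bounded (range wk)"
    proof -
      have "\<forall>k. norm (wk k) \<le> norm w + Cw"
        using wkb Cw by (smt (verit) norm_triangle_ineq2 real_norm_def abs_le_iff)
      then show ?thesis unfolding bounded_iff by blast
    qed
    then obtain wt \<sigma> where \<sigma>: "strict_mono \<sigma>" "(wk \<circ> \<sigma>) \<longlonglongrightarrow> wt"
      using bounded_imp_convergent_subsequence by blast
    have wtb: "norm (wt - w) \<le> \<kappa>' * norm q"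
    proof -
      have l1: "(\<lambda>k. norm (wk (\<sigma> k) - w)) \<longlonglongrightarrow> norm (wt - w)"
        using \<sigma>(2) by (intro tendsto_intros) (simp add: comp_def)
      have l2: "(\<lambda>k. \<kappa>' * norm (E (\<sigma> k)) + t (\<sigma> k)) \<longlonglongrightarrow> \<kappa>' * norm (- q) + 0"
        using LIMSEQ_subseq_LIMSEQ[OF bndlim \<sigma>(1)] by (simp add: comp_def)
      have "norm (wt - w) \<le> \<kappa>' * norm (- q) + 0"
        by (rule LIMSEQ_le[OF l1 l2]) (use wkb in auto)
      then show ?thesis by simp
    qed
    show "\<exists>w'. G' zbar w' + (1/2) *\<^sub>R (G'' zbar v v) \<in> tangent_cone K (G' zbar v)
                 \<and> norm (w' - w) \<le> (\<kappa>' + 1) * norm q"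
    proof (intro exI conjI)
      show "norm (wt - w) \<le> (\<kappa>' + 1) * norm q" using wtb order_trans mult_right_mono[of "\<kappa>'" "\<kappa>' + 1" "norm q"] by fastforce
      define s where "s k = t (\<sigma> k)" for k
      define X where "X k = v + s k *\<^sub>R wk (\<sigma> k)" for k
      define V where "V k = (1 / s k) *\<^sub>R ((1 / s k) *\<^sub>R G (y (\<sigma> k)) - A v)" for k
      have spos: "\<forall>k. s k > 0" using tpos by (simp add: s_def)
      have slim: "s \<longlonglongrightarrow> 0" using LIMSEQ_subseq_LIMSEQ[OF tlim \<sigma>(1)] unfolding s_def[abs_def] comp_def .
      have wsl: "(\<lambda>k. wk (\<sigma> k)) \<longlonglongrightarrow> wt" using \<sigma>(2) by (simp add: comp_def)
      have "(\<lambda>k. v + s k *\<^sub>R wk (\<sigma> k)) \<longlonglongrightarrow> v + 0 *\<^sub>R wt" by (intro tendsto_intros slim wsl)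
      then have Xlim: "X \<longlonglongrightarrow> v" unfolding X_def by simp
      obtain CX where CX: "\<forall>k. norm (X k) \<le> CX"
        using convergent_imp_Bseq[OF convergentI[OF Xlim]] unfolding Bseq_def by (meson less_imp_le)
      have Veq: "V k = A (wk (\<sigma> k)) + (1/2) *\<^sub>R B (X k) (X k) + (1/(s k)^2) *\<^sub>R R (s k *\<^sub>R X k)" for k
      proof -
        have "y (\<sigma> k) = zbar + s k *\<^sub>R X k" unfolding X_def s_def by (rule yeq)
        then show ?thesis unfolding V_def R_def X_def
          by (simp only:) (rule id1, metis spos less_irrefl)
      qed
      have Rlim2: "(\<lambda>k. (1/(s k)^2) *\<^sub>R R (s k *\<^sub>R X k)) \<longlonglongrightarrow> 0"
        by (rule rem_seq[OF T spos slim CX])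
      have "(\<lambda>k. A (wk (\<sigma> k)) + (1/2) *\<^sub>R B (X k) (X k) + (1/(s k)^2) *\<^sub>R R (s k *\<^sub>R X k)) \<longlonglongrightarrow>
             A wt + (1/2) *\<^sub>R B v v + 0"
        by (intro tendsto_intros Xlim Rlim2 wsl blinfun.tendsto)
      then have Vlim: "V \<longlonglongrightarrow> A wt + (1/2) *\<^sub>R B v v" unfolding Veq[abs_def] by simp
      have VK: "\<forall>k. A v + s k *\<^sub>R V k \<in> K"
      proof
        fix k
        have sk: "s k > 0" using spos by auto
        have "A v + s k *\<^sub>R V k = (1 / s k) *\<^sub>R G (y (\<sigma> k))" using sk unfolding V_def by simp
        moreover have "G (y (\<sigma> k)) \<in> K" using y(1) by auto
        ultimately show "A v + s k *\<^sub>R V k \<in> K" using coneK sk by simp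
      qed
      show "G' zbar wt + (1/2) *\<^sub>R (G'' zbar v v) \<in> tangent_cone K (G' zbar v)"
        unfolding tangent_cone_def A_def[symmetric] B_def[symmetric]
        using spos slim Vlim VK by blast
    qed
  qed
qed

end
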